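(* Consider the setting described in the context, and assume $\operatorname{supp}(f_{(0,0)})=\mathcal{U}$. Fix a radius $r>0$. Then there exists a constant $\delta_r>0$, depending on $\operatorname{diam}(\mathcal{U}),\sigma,d,f_{(0,0)}$ (and not on $n$ or $k$), such that for all $n\in\mathbb{N}_0$ and all $k\in\{0,\dots,\bar k\}$, $$f_{(n,k)}\big(B_r(u^*_{(n)})\big)\ge\delta_r .$$
   Context: Setting: $d,m\ge1$; $\mathcal{X}\subseteq\mathbb{R}^m$; $u_{\min}<u_{\max}$ in $\mathbb{R}^d$ (componentwise) and $\mathcal{U}=\{u\in\mathbb{R}^d:u_{\min}\le u\le u_{\max}\}$; $\operatorname{proj}_{\mathcal{U}}(v)=\operatorname{argmin}_{u\in\mathcal{U}}|u-v|$. The transition map is $\Phi(x,u)=\Phi_s(x)+F_cu$ with $\Phi_s:\mathcal{X}\to\mathcal{X}$, $F_c\in\mathbb{R}^{m\times d}$, $\nu>0$, and $A=F_c^\top F_c+\nu I_d$ of full rank. A reference $x^{\mathrm{ref}}(t_n)\in\mathcal{X}$ is given at times $t_n=n\Delta t$. For a state $x_{(n)}\in\mathcal{X}$, $L_n(u)=|\Phi_s(x_{(n)})+F_cu-x^{\mathrm{ref}}(t_{n+1})|^2+\nu|u|^2$ and $u^*_{(n)}$ is its unique minimizer over $\mathcal{U}$. For a probability measure $f$ on $\mathbb{R}^d$ and $\alpha>0$, $m^\alpha_{L_n}[f]=\int u e^{-\alpha L_n(u)}f(du)/\int e^{-\alpha L_n(u)}f(du)$. Parameters: $\alpha,\lambda,\sigma,\tau>0$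 with $\lambda\tau\in(0,1)$, $\bar k\in\mathbb{N}$. Mean-field MPC–CBO dynamics: given $x_{(0)}\in\mathcal{X}$ and a probability measure $f_{(0,0)}$ on $\mathbb{R}^d$, for each $n\in\mathbb{N}_0$ and $k=0,\dots,\bar k-1$ let $f_{(n,k+1)}$ be the law of $\operatorname{proj}_{\mathcal{U}}\big(\bar U+\lambda\tau(m^\alpha_{L_n}[f_{(n,k)}]-\bar U)+\sigma\sqrt\tau\,\theta\big)$, where $\bar U\sim f_{(n,k)}$ and $\theta\sim\mathcal{N}(0,I_d)$ are independent; then $u_{(n)}=m^\alpha_{L_n}[f_{(n,\bar k)}]$, $x_{(n+1)}=\Phi_s(x_{(n)})+F_cu_{(n)}$, and $f_{(n+1,0)}=f_{(n,\bar k)}$. $B_r(v)$ denotes the Euclidean ball of radius $r$ about $v$. *)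

theory Defs
  imports "HOL-Probability.Probability"
begin

definition msupp :: "'a::metric_space measure \<Rightarrow> 'a set" where
  "msupp \<mu> = {x. \<forall>e>0. emeasure \<mu> (ball x e) > 0}"

definition std_gauss :: "(real^'d) measure" where
  "std_gauss = density lborel
     (\<lambda>\<theta>. ennreal ((2 * pi) powr (- real CARD('d) / 2) * exp (- (norm \<theta>)\<^sup>2 / 2)))"

definition cons_point :: "real \<Rightarrow> ('a::euclidean_space \<Rightarrow> real) \<Rightarrow> 'a measure \<Rightarrow> 'a" where
  "cons_point \<alpha> L \<mu> =
     (\<integral>u. exp (- \<alpha> * L u) *\<^sub>R u \<partial>\<mu>) /\<^sub>R (\<integral>u. exp (- \<alpha> * L u) \<partial>\<mu>)"

definition box_set :: "real^'d \<Rightarrow> real^'d \<Rightarrow> (real^'d) set" where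
  "box_set umin umax = {u. umin \<le> u \<and> u \<le> umax}"

definition mpc_cost ::
  "(real^'m \<Rightarrow> real^'m) \<Rightarrow> real^'d^'m \<Rightarrow> real \<Rightarrow> real^'m \<Rightarrow> real^'m \<Rightarrow> real^'d \<Rightarrow> real" where
  "mpc_cost \<Phi>s Fc \<nu> x xr u = (norm (\<Phi>s x + Fc *v u - xr))\<^sup>2 + \<nu> * (norm u)\<^sup>2"

end

theory Submission
  imports Defs
begin



lemma gauss_total:
  "(\<integral>\<^sup>+\<theta>. ennreal ((2 * pi) powr (- real DIM('a) / 2) * exp (- (norm (\<theta>::'a::euclidean_space))\<^sup>2 / 2)) \<partial>lborel) = 1"
proof -
  have eq: "(2 * pi) powr (- real DIM('a) / 2) * exp (- (norm \<theta>)\<^sup>2 / 2)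
     = (\<Prod>b\<in>(Basis::'a set). std_normal_density (\<theta> \<bullet> b))" for \<theta> :: 'a
  proof -
    have n: "(norm \<theta>)\<^sup>2 = (\<Sum>b\<in>Basis. (\<theta> \<bullet> b)\<^sup>2)"
      unfolding power2_norm_eq_inner by (subst euclidean_inner) (simp add: power2_eq_square)
    have "(\<Prod>b\<in>Basis. std_normal_density (\<theta> \<bullet> b)) =
        (\<Prod>b\<in>(Basis::'a set). 1 / sqrt (2 * pi)) * (\<Prod>b\<in>Basis. exp (- (\<theta> \<bullet> b)\<^sup>2 / 2))"
      unfolding std_normal_density_def by (rule prod.distrib)
    also have "(\<Prod>b\<in>Basis. exp (- (\<theta> \<bullet> b)\<^sup>2 / 2)) = exp (- (norm \<theta>)\<^sup>2 / 2)"
      by (simp add: n exp_sum[symmetric] sum_negf sum_divide_distrib)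
    also have "(\<Prod>b\<in>(Basis::'a set). 1 / sqrt (2 * pi)) = (2 * pi) powr (- real DIM('a) / 2)"
    proof -
      have e1: "(\<Prod>b\<in>(Basis::'a set). 1 / sqrt (2 * pi)) = (1 / sqrt (2 * pi)) ^ DIM('a)" by simp
      have e2: "1 / sqrt (2 * pi) = (2 * pi) powr (- (1/2))"
        using powr_minus_divide[of "2 * pi" "1/2"] powr_half_sqrt[of "2 * pi"] by simp
      have e3: "((2 * pi) powr (- (1/2))) ^ DIM('a) = (2 * pi) powr (real DIM('a) * (- (1/2)))"
        by (rule powr_power) simp
      have e4: "real DIM('a) * (- (1/2)) = - real DIM('a) / 2" by simp
      show ?thesis by (subst e1, subst e2, subst e3, subst e4) (rule refl)
    qed
    finally show ?thesis by simp
  qed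
  have s1: "(\<integral>\<^sup>+\<theta>. ennreal ((2 * pi) powr (- real DIM('a) / 2) * exp (- (norm (\<theta>::'a))\<^sup>2 / 2)) \<partial>lborel)
     = (\<integral>\<^sup>+\<theta>. (\<Prod>b\<in>Basis. ennreal (std_normal_density ((\<theta>::'a) \<bullet> b))) \<partial>lborel)"
    unfolding eq by (simp add: prod_ennreal)
  have s2: "(\<integral>\<^sup>+\<theta>. (\<Prod>b\<in>Basis. ennreal (std_normal_density ((\<theta>::'a) \<bullet> b))) \<partial>lborel) = (\<Prod>b\<in>(Basis::'a set). (\<integral>\<^sup>+x. ennreal (std_normal_density x) \<partial>lborel))"
    by (rule nn_integral_lborel_prod) auto
  have s3: "(\<integral>\<^sup>+x. ennreal (std_normal_density x) \<partial>lborel) = 1"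
  proof -
    have "emeasure (density lborel (\<lambda>x. ennreal (std_normal_density x))) UNIV = 1"
    proof -
      interpret prob_space "density lborel (\<lambda>x. ennreal (std_normal_density x))"
        by (rule prob_space_normal_density) simp
      show ?thesis using emeasure_space_1 by simp
    qed
    then show ?thesis by (subst (asm) emeasure_density) auto
  qed
  show ?thesis by (rule trans[OF s1]) (simp add: s2 s3)
qed

lemma gauss_prob: "prob_space (std_gauss :: (real^'d) measure)"
proof
  have "emeasure (std_gauss :: (real^'d) measure) (space std_gauss) = 
    (\<integral>\<^sup>+\<theta>. ennreal ((2 * pi) powr (- real DIM(real^'d) / 2) * exp (- (norm (\<theta>::real^'d))\<^sup>2 / 2)) \<partial>lborel)"
    unfolding std_gauss_def by (simp add: emeasure_density)
  then show "emeasure (std_gauss :: (real^'d) measure) (space std_gauss) = 1"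
    using gauss_total[where 'a="real^'d"] by simp
qed


lemma gauss_ball_lower:
  fixes D \<rho> :: real
  assumes "\<rho> > 0" "D \<ge> 0"
  shows "\<exists>c>0. \<forall>p::real^'d. norm p \<le> D \<longrightarrow> emeasure std_gauss (ball p \<rho>) \<ge> ennreal c"
proof -
  define c0 where "c0 = (2 * pi) powr (- real CARD('d) / 2) * exp (- (D + \<rho>)\<^sup>2 / 2)"
  define V where "V = unit_ball_vol (real DIM(real^'d)) * \<rho> ^ DIM(real^'d)"
  have c0: "c0 > 0" unfolding c0_def by simp
  have V: "V > 0" unfolding V_def using assms by simp
  show ?thesis
  proof (intro exI[of _ "c0 * V"] conjI allI impI)
    show "0 < c0 * V" using c0 V by simp
    fix p :: "real^'d" assume p: "norm p \<le> D"
    have eB: "emeasure lborel (ball p \<rho>) = ennreal V"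
      unfolding V_def using emeasure_ball[where c=p and r=\<rho>] assms(1) by simp
    have "ennreal (c0 * V) = (\<integral>\<^sup>+\<theta>. ennreal c0 * indicator (ball p \<rho>) \<theta> \<partial>lborel)"
      using c0 V eB by (subst nn_integral_cmult_indicator) (auto simp: ennreal_mult)
    also have "\<dots> \<le> (\<integral>\<^sup>+\<theta>. ennreal ((2 * pi) powr (- real CARD('d) / 2) * exp (- (norm \<theta>)\<^sup>2 / 2)) * indicator (ball p \<rho>) \<theta> \<partial>lborel)"
    proof (rule nn_integral_mono)
      fix \<theta> :: "real^'d"
      show "ennreal c0 * indicator (ball p \<rho>) \<theta> \<le> ennreal ((2 * pi) powr (- real CARD('d) / 2) * exp (- (norm \<theta>)\<^sup>2 / 2)) * indicator (ball p \<rho>) \<theta>"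
      proof (cases "\<theta> \<in> ball p \<rho>")
        case True
        then have "norm \<theta> \<le> D + \<rho>" using p
          using norm_triangle_ineq[of p "\<theta> - p"] by (auto simp: dist_norm norm_minus_commute)
        then have "(norm \<theta>)\<^sup>2 \<le> (D + \<rho>)\<^sup>2" by (simp add: power_mono)
        then have "c0 \<le> (2 * pi) powr (- real CARD('d) / 2) * exp (- (norm \<theta>)\<^sup>2 / 2)"
          unfolding c0_def by (intro mult_left_mono) auto
        then show ?thesis using True by (simp add: ennreal_leI)
      qed simp
    qed
    also have "\<dots> = emeasure std_gauss (ball p \<rho>)"
      unfolding std_gauss_def by (simp add: emeasure_density)
    finally show "ennreal (c0 * V) \<le> emeasure std_gauss (ball p \<rho>)" .
  qed
qed


lemma supp_AE:
  fixes M :: "'a::euclidean_space measure"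
  assumes sM: "sets M = sets borel" and cU: "closed U" and supp: "msupp M = U"
  shows "AE v in M. v \<in> U"
proof -
  define F where "F = {ball x e | x e. e > 0 \<and> emeasure M (ball x e) = 0}"
  have "\<And>S. S \<in> F \<Longrightarrow> open S" unfolding F_def by auto
  then obtain F' where F': "F' \<subseteq> F" "countable F'" "\<Union>F' = \<Union>F" by (rule Lindelof)
  have nul: "\<Union>F' \<in> null_sets M"
  proof -
    have "(\<Union>S\<in>F'. id S) \<in> null_sets M"
    proof (rule null_sets_UN')
      show "countable F'" by fact
      fix S assume "S \<in> F'"
      then obtain x e where "S = ball x e" "emeasure M (ball x e) = 0" using F' unfolding F_def by auto
      then show "id S \<in> null_sets M" using sM by (auto simp: null_sets_def)
    qed
    then show ?thesis by simp
  qed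
  have sub: "{x \<in> space M. \<not> x \<in> U} \<subseteq> \<Union>F'"
  proof
    fix x assume "x \<in> {x \<in> space M. \<not> x \<in> U}"
    then have "x \<notin> msupp M" using supp by auto
    then obtain e where "e > 0" "\<not> emeasure M (ball x e) > 0" unfolding msupp_def by auto
    then have "ball x e \<in> F" unfolding F_def by (auto simp: not_gr_zero)
    then have "x \<in> \<Union>F" using \<open>e > 0\<close> by (meson UnionI centre_in_ball)
    then show "x \<in> \<Union>F'" using F'(3) by simp
  qed
  show ?thesis by (rule AE_I'[OF nul sub])
qed

lemma unif_pos:
  fixes M :: "'a::euclidean_space measure"
  assumes sM: "sets M = sets borel" and fin: "finite_measure M" and cU: "compact U" and ne: "U \<noteq> {}"
    and supp: "U \<subseteq> msupp M" and r: "r > 0"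
  shows "\<exists>\<delta>>0. \<forall>u\<in>U. measure M (ball u r) \<ge> \<delta>"
proof -
  have "U \<subseteq> (\<Union>c\<in>U. ball c (r/2))" using r by auto
  then obtain C where C: "C \<subseteq> U" "finite C" "U \<subseteq> (\<Union>c\<in>C. ball c (r/2))"
    using compactE_image[OF cU, of U "\<lambda>c. ball c (r/2)"] by auto
  have Cne: "C \<noteq> {}" using C ne by auto
  have pos: "measure M (ball c (r/2)) > 0" if "c \<in> C" for c
  proof -
    have "emeasure M (ball c (r/2)) > 0" using supp C that r unfolding msupp_def by auto
    then show ?thesis using finite_measure.emeasure_eq_measure[OF fin]
      by (simp add: ennreal_less_zero_iff) 
  qed
  define \<delta> where "\<delta> = Min ((\<lambda>c. measure M (ball c (r/2))) ` C)"
  have "\<delta> > 0" unfolding \<delta>_def using C Cne pos by (subst Min_gr_iff) auto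
  moreover have "\<forall>u\<in>U. measure M (ball u r) \<ge> \<delta>"
  proof
    fix u assume "u \<in> U"
    then obtain c where c: "c \<in> C" "u \<in> ball c (r/2)" using C by auto
    have "ball c (r/2) \<subseteq> ball u r"
    proof
      fix x assume "x \<in> ball c (r/2)"
      then show "x \<in> ball u r" using c(2) dist_triangle[of u x c] by (simp add: dist_commute)
    qed
    then have "measure M (ball c (r/2)) \<le> measure M (ball u r)"
      using sM by (intro finite_measure.finite_measure_mono[OF fin]) auto
    moreover have "\<delta> \<le> measure M (ball c (r/2))" unfolding \<delta>_def using C c by auto
    ultimately show "measure M (ball u r) \<ge> \<delta>" by linarith
  qed
  ultimately show ?thesis by blast
qed


lemma box_eq_cbox: "box_set a b = cbox a (b::real^'d)"
  unfolding box_set_def interval_cbox_cart[symmetric] by auto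

lemma box_props:
  fixes a b :: "real^'d"
  assumes "\<forall>i. a $ i < b $ i"
  shows "compact (box_set a b)" "convex (box_set a b)" "closed (box_set a b)" "box_set a b \<noteq> {}"
    "bounded (box_set a b)"
proof -
  show "compact (box_set a b)" "convex (box_set a b)" "closed (box_set a b)" "bounded (box_set a b)"
    by (simp_all add: box_eq_cbox compact_imp_closed compact_imp_bounded)
  have "a \<in> box_set a b" using assms unfolding box_set_def by (auto simp: less_eq_vec_def less_imp_le)
  then show "box_set a b \<noteq> {}" by auto
qed

lemma cons_in_box:
  fixes M :: "(real^'d) measure" and L :: "real^'d \<Rightarrow> real"
  assumes P: "prob_space M" and sM: "sets M = sets borel"
    and AEU: "AE v in M. v \<in> box_set umin umax"
    and Lc: "continuous_on UNIV L" and Lnn: "\<forall>u. L u \<ge> 0" and \<alpha>: "\<alpha> \<ge> 0"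
  shows "cons_point \<alpha> L M \<in> box_set umin umax"
proof -
  interpret prob_space M by fact
  define w where "w u = exp (- \<alpha> * L u)" for u
  have wc: "continuous_on UNIV w" unfolding w_def by (intro continuous_intros Lc)
  have meas: "f \<in> borel_measurable M" if "continuous_on UNIV f" for f :: "real^'d \<Rightarrow> 'b::topological_space"
    using borel_measurable_continuous_onI[OF that] measurable_cong_sets[OF sM refl] by blast
  have w_pos: "w u > 0" for u unfolding w_def by simp
  have w_le: "w u \<le> 1" for u unfolding w_def using Lnn \<alpha> by (simp add: mult_nonneg_nonneg)
  have bU: "bounded (box_set umin umax)" by (simp add: box_eq_cbox compact_imp_bounded)
  then obtain B where B: "\<forall>x\<in>box_set umin umax. norm x \<le> B" by (auto simp: bounded_iff)
  have int_w: "integrable M w"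
    by (rule integrable_const_bound[where B=1]) (use w_le w_pos in \<open>auto intro!: meas wc AE_I2 simp: abs_of_pos\<close>)
  have int_wu: "integrable M (\<lambda>u. w u *\<^sub>R u)"
  proof (rule integrable_const_bound[where B=B])
    show "AE x in M. norm (w x *\<^sub>R x) \<le> B"
      using AEU
    proof eventually_elim
      case (elim x)
      have "norm (w x *\<^sub>R x) = w x * norm x" using w_pos by (simp add: less_imp_le)
      also have "\<dots> \<le> 1 * norm x" using w_le by (intro mult_right_mono) auto
      also have "\<dots> \<le> B" using B elim by auto
      finally show ?case .
    qed
    show "(\<lambda>u. w u *\<^sub>R u) \<in> borel_measurable M" by (intro meas continuous_intros wc)
  qed
  have int_wi: "integrable M (\<lambda>u. w u * u $ i)" for i
  proof -
    have "integrable M (\<lambda>u. (w u *\<^sub>R u) \<bullet> axis i 1)" using int_wu by (rule integrable_inner_left)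
    moreover have "(\<lambda>u. (w u *\<^sub>R u) \<bullet> axis i 1) = (\<lambda>u. w u * u $ i)" by (simp add: cart_eq_inner_axis)
    ultimately show ?thesis by simp
  qed
  define Z where "Z = (\<integral>u. w u \<partial>M)"
  have Z: "Z > 0"
  proof -
    have "Z \<ge> 0" unfolding Z_def by (intro integral_nonneg_AE) (simp add: less_imp_le w_pos)
    moreover have "Z \<noteq> 0"
    proof
      assume "Z = 0"
      then have "AE x in M. w x = 0" unfolding Z_def
        using integral_nonneg_eq_0_iff_AE[OF int_w] w_pos by (simp add: less_imp_le)
      then have "AE x in M. False" using w_pos by (auto elim: eventually_mono simp: less_le)
      then show False by simp
    qed
    ultimately show ?thesis by simp
  qed
  define N where "N = (\<integral>u. w u *\<^sub>R u \<partial>M)"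
  have Ni: "N $ i = (\<integral>u. w u * u $ i \<partial>M)" for i
  proof -
    have "N $ i = N \<bullet> axis i 1" by (simp add: cart_eq_inner_axis)
    also have "\<dots> = (\<integral>u. (w u *\<^sub>R u) \<bullet> axis i 1 \<partial>M)" unfolding N_def
      by (rule integral_inner_left[symmetric]) (rule int_wu)
    also have "\<dots> = (\<integral>u. w u * u $ i \<partial>M)" by (simp add: cart_eq_inner_axis)
    finally show ?thesis .
  qed
  have cp: "cons_point \<alpha> L M = N /\<^sub>R Z" unfolding cons_point_def N_def Z_def w_def by simp
  have lo: "umin $ i * Z \<le> N $ i" for i
  proof -
    have "umin $ i * Z = (\<integral>u. umin $ i * w u \<partial>M)" unfolding Z_def by simp
    also have "\<dots> \<le> (\<integral>u. w u * u $ i \<partial>M)"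
    proof (rule integral_mono_AE)
      show "integrable M (\<lambda>u. umin $ i * w u)" using int_w by simp
      show "integrable M (\<lambda>u. w u * u $ i)" by (rule int_wi)
      show "AE x in M. umin $ i * w x \<le> w x * x $ i"
        using AEU
      proof eventually_elim
        case (elim x)
        then have "umin $ i \<le> x $ i" unfolding box_set_def by (auto simp: less_eq_vec_def)
        then show ?case using w_pos[of x] by (simp add: mult.commute mult_left_mono less_imp_le)
      qed
    qed
    finally show ?thesis by (simp add: Ni)
  qed
  have hi: "N $ i \<le> umax $ i * Z" for i
  proof -
    have "N $ i = (\<integral>u. w u * u $ i \<partial>M)" by (simp add: Ni)
    also have "\<dots> \<le> (\<integral>u. umax $ i * w u \<partial>M)"
    proof (rule integral_mono_AE)
      show "integrable M (\<lambda>u. umax $ i * w u)" using int_w by simp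
      show "integrable M (\<lambda>u. w u * u $ i)" by (rule int_wi)
      show "AE x in M. w x * x $ i \<le> umax $ i * w x"
        using AEU
      proof eventually_elim
        case (elim x)
        then have "x $ i \<le> umax $ i" unfolding box_set_def by (auto simp: less_eq_vec_def)
        then show ?case using w_pos[of x] by (simp add: mult.commute mult_left_mono less_imp_le)
      qed
    qed
    also have "\<dots> = umax $ i * Z" unfolding Z_def by simp
    finally show ?thesis .
  qed
  show ?thesis unfolding cp box_set_def
    using lo hi Z by (auto simp: less_eq_vec_def field_simps)
qed


lemma sets_std_gauss[simp]: "sets (std_gauss :: (real^'d) measure) = sets borel"
  unfolding std_gauss_def by simp

lemma space_std_gauss[simp]: "space (std_gauss :: (real^'d) measure) = UNIV"
  unfolding std_gauss_def by simp

lemma step_lower: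
  fixes M :: "(real^'d) measure" and U :: "(real^'d) set"
  assumes P: "prob_space M" and sM: "sets M = sets borel"
    and AEU: "AE v in M. v \<in> U"
    and cvx: "convex U" and cl: "closed U" and ne: "U \<noteq> {}"
    and B: "\<forall>x\<in>U. norm x \<le> B"
    and m: "m \<in> U" and a: "0 \<le> a" "a \<le> 1" and s: "s > 0" and r: "r > 0"
    and gauss: "\<forall>p::real^'d. norm p \<le> 2 * B / s \<longrightarrow> emeasure std_gauss (ball p (r / s)) \<ge> ennreal c"
    and us: "ustar \<in> U"
  shows "emeasure (distr (M \<Otimes>\<^sub>M std_gauss) borel
            (\<lambda>(v, \<theta>). closest_point U (v + a *\<^sub>R (m - v) + s *\<^sub>R \<theta>))) (ball ustar r) \<ge> ennreal c"
proof -
  interpret M: prob_space M by fact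
  interpret G: prob_space "std_gauss :: (real^'d) measure" by (rule gauss_prob)
  define F where "F = (\<lambda>(v, \<theta>). closest_point U (v + a *\<^sub>R (m - v) + s *\<^sub>R (\<theta>::real^'d)))"
  have spM: "space M = UNIV" using sets_eq_imp_space_eq[OF sM] by simp
  have sPG: "sets (M \<Otimes>\<^sub>M std_gauss) = sets (borel :: ((real^'d) \<times> (real^'d)) measure)"
    unfolding borel_prod[symmetric] by (rule sets_pair_measure_cong[OF sM sets_std_gauss])
  have spPG: "space (M \<Otimes>\<^sub>M std_gauss) = UNIV" by (simp add: space_pair_measure spM)
  have Fc: "continuous_on UNIV F"
  proof -
    have "continuous_on UNIV (\<lambda>x::(real^'d) \<times> (real^'d). closest_point U (fst x + a *\<^sub>R (m - fst x) + s *\<^sub>R snd x))"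
      by (intro continuous_on_compose2[OF continuous_on_closest_point[OF cvx cl ne, of UNIV]] continuous_intros) auto
    moreover have "F = (\<lambda>x. closest_point U (fst x + a *\<^sub>R (m - fst x) + s *\<^sub>R snd x))"
      unfolding F_def by (auto simp: fun_eq_iff)
    ultimately show ?thesis by simp
  qed
  have Fm: "F \<in> measurable (M \<Otimes>\<^sub>M std_gauss) borel"
    using borel_measurable_continuous_onI[OF Fc] measurable_cong_sets[OF sPG refl] by blast
  define X where "X = F -` ball ustar r \<inter> space (M \<Otimes>\<^sub>M std_gauss)"
  have Xs: "X \<in> sets (M \<Otimes>\<^sub>M std_gauss)" unfolding X_def using Fm by (intro measurable_sets) auto
  have "emeasure (distr (M \<Otimes>\<^sub>M std_gauss) borel F) (ball ustar r) = emeasure (M \<Otimes>\<^sub>M std_gauss) X"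
    unfolding X_def using Fm by (intro emeasure_distr) auto
  also have "\<dots> = (\<integral>\<^sup>+v. emeasure std_gauss (Pair v -` X) \<partial>M)"
    using Xs by (rule G.emeasure_pair_measure_alt)
  also have "\<dots> \<ge> (\<integral>\<^sup>+v. ennreal c \<partial>M)"
  proof (rule nn_integral_mono_AE)
    show "AE v in M. ennreal c \<le> emeasure std_gauss (Pair v -` X)"
      using AEU
    proof eventually_elim
      case (elim v)
      define w where "w = v + a *\<^sub>R (m - v)"
      have wU: "w \<in> U"
      proof -
        have "(1 - a) *\<^sub>R v + a *\<^sub>R m \<in> U" using convexD[OF cvx elim m] a by auto
        moreover have "(1 - a) *\<^sub>R v + a *\<^sub>R m = w" unfolding w_def by (simp add: algebra_simps)
        ultimately show ?thesis by simp
      qed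
      define p where "p = (1 / s) *\<^sub>R (ustar - w)"
      have np: "norm p \<le> 2 * B / s"
      proof -
        have "norm (ustar - w) \<le> norm ustar + norm w" by (rule norm_triangle_ineq4)
        also have "\<dots> \<le> 2 * B" using B wU us by (metis add_mono mult_2)
        finally show ?thesis unfolding p_def using s by (simp add: divide_right_mono)
      qed
      have sub: "ball p (r / s) \<subseteq> Pair v -` X"
      proof
        fix \<theta> assume th: "\<theta> \<in> ball p (r / s)"
        have "dist (closest_point U (w + s *\<^sub>R \<theta>)) ustar = dist (closest_point U (w + s *\<^sub>R \<theta>)) (closest_point U ustar)"
          using us by (simp add: closest_point_self)
        also have "\<dots> \<le> dist (w + s *\<^sub>R \<theta>) ustar" by (rule closest_point_lipschitz[OF cvx cl ne])
        also have "dist (w + s *\<^sub>R \<theta>) ustar = s * dist p \<theta>"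
        proof -
          have "w + s *\<^sub>R \<theta> - ustar = s *\<^sub>R (\<theta> - p)" unfolding p_def using s by (simp add: algebra_simps)
          then show ?thesis using s by (simp add: dist_norm norm_minus_commute)
        qed
        also have "\<dots> < s * (r / s)" using th s by (intro mult_strict_left_mono) auto
        also have "\<dots> = r" using s by simp
        finally have "dist ustar (closest_point U (w + s *\<^sub>R \<theta>)) < r" by (simp add: dist_commute)
        then show "\<theta> \<in> Pair v -` X" unfolding X_def F_def w_def spPG by simp
      qed
      have "ennreal c \<le> emeasure std_gauss (ball p (r / s))" using gauss np by blast
      also have "\<dots> \<le> emeasure std_gauss (Pair v -` X)"
        using sub sets_Pair1[OF Xs] by (intro emeasure_mono) auto
      finally show ?case .
    qed
  qed
  also have "(\<integral>\<^sup>+v. ennreal c \<partial>M) = ennreal c" using M.emeasure_space_1 by simp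
  finally show ?thesis unfolding F_def .
qed


lemma step_inv:
  fixes M :: "(real^'d) measure" and U :: "(real^'d) set" and a s :: real and m :: "real^'d"
  assumes P: "prob_space M" and sM: "sets M = sets borel"
    and cvx: "convex U" and cl: "closed U" and ne: "U \<noteq> {}"
  defines "M' \<equiv> distr (M \<Otimes>\<^sub>M std_gauss) borel
            (\<lambda>(v, \<theta>). closest_point U (v + a *\<^sub>R (m - v) + s *\<^sub>R \<theta>))"
  shows "prob_space M'" "sets M' = sets borel" "AE v in M'. v \<in> U"
proof -
  interpret M: prob_space M by fact
  interpret G: prob_space "std_gauss :: (real^'d) measure" by (rule gauss_prob)
  interpret PG: pair_prob_space M "std_gauss :: (real^'d) measure" ..
  define F where "F = (\<lambda>(v, \<theta>). closest_point U (v + a *\<^sub>R (m - v) + s *\<^sub>R (\<theta>::real^'d)))"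
  have sPG: "sets (M \<Otimes>\<^sub>M std_gauss) = sets (borel :: ((real^'d) \<times> (real^'d)) measure)"
    unfolding borel_prod[symmetric] by (rule sets_pair_measure_cong[OF sM sets_std_gauss])
  have Fc: "continuous_on UNIV F"
  proof -
    have "continuous_on UNIV (\<lambda>x::(real^'d) \<times> (real^'d). closest_point U (fst x + a *\<^sub>R (m - fst x) + s *\<^sub>R snd x))"
      by (intro continuous_on_compose2[OF continuous_on_closest_point[OF cvx cl ne, of UNIV]] continuous_intros) auto
    moreover have "F = (\<lambda>x. closest_point U (fst x + a *\<^sub>R (m - fst x) + s *\<^sub>R snd x))"
      unfolding F_def by (auto simp: fun_eq_iff)
    ultimately show ?thesis by simp
  qed
  have Fm: "F \<in> measurable (M \<Otimes>\<^sub>M std_gauss) borel"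
    using borel_measurable_continuous_onI[OF Fc] measurable_cong_sets[OF sPG refl] by blast
  have M'F: "M' = distr (M \<Otimes>\<^sub>M std_gauss) borel F" unfolding M'_def F_def ..
  show "prob_space M'" unfolding M'F by (rule PG.P.prob_space_distr[OF Fm])
  show "sets M' = sets borel" unfolding M'F by simp
  have "AE x in M \<Otimes>\<^sub>M std_gauss. F x \<in> U"
    using closest_point_in_set[OF cl ne] unfolding F_def by (auto intro!: AE_I2)
  then show "AE v in M'. v \<in> U" unfolding M'F
    using cl by (subst AE_distr_iff[OF Fm]) auto
qed

theorem mainTheorem3:
  fixes X :: "(real^'m) set"
    and umin umax :: "real^'d"
    and \<Phi>s :: "real^'m \<Rightarrow> real^'m"
    and Fc :: "real^'d^'m"
    and \<nu> \<Delta>t \<alpha> lam \<sigma> \<tau> r :: real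
    and xref :: "real \<Rightarrow> real^'m"
    and kbar :: nat
    and x :: "nat \<Rightarrow> real^'m"
    and u :: "nat \<Rightarrow> real^'d"
    and f :: "nat \<Rightarrow> nat \<Rightarrow> (real^'d) measure"
  defines "U \<equiv> box_set umin umax"
  defines "L \<equiv> (\<lambda>n. mpc_cost \<Phi>s Fc \<nu> (x n) (xref (real (Suc n) * \<Delta>t)))"
  assumes umin_umax: "\<forall>i. umin $ i < umax $ i"
    and \<Phi>s_maps: "\<forall>y\<in>X. \<Phi>s y \<in> X"
    and \<nu>_pos: "\<nu> > 0"
    and A_rank: "rank (transpose Fc ** Fc + \<nu> *\<^sub>R mat 1) = CARD('d)"
    and \<Delta>t_pos: "\<Delta>t > 0"
    and xref_in: "\<forall>n::nat. xref (real n * \<Delta>t) \<in> X"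
    and params: "\<alpha> > 0" "lam > 0" "\<sigma> > 0" "\<tau> > 0" "lam * \<tau> < 1"
    and kbar_pos: "kbar \<ge> 1"
    and x0: "x 0 \<in> X"
    and f00_prob: "prob_space (f 0 0)"
    and f00_sets: "sets (f 0 0) = sets borel"
    and f00_supp: "msupp (f 0 0) = U"
    and f_step: "\<forall>n k. k < kbar \<longrightarrow>
        f n (Suc k) = distr (f n k \<Otimes>\<^sub>M std_gauss) borel
          (\<lambda>(v, \<theta>). closest_point U
             (v + (lam * \<tau>) *\<^sub>R (cons_point \<alpha> (L n) (f n k) - v) + (\<sigma> * sqrt \<tau>) *\<^sub>R \<theta>))"
    and u_def: "\<forall>n. u n = cons_point \<alpha> (L n) (f n kbar)"
    and x_step: "\<forall>n. x (Suc n) = \<Phi>s (x n) + Fc *v u n"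
    and f_restart: "\<forall>n. f (Suc n) 0 = f n kbar"
    and r_pos: "r > 0"
  shows "\<exists>\<delta>>0. \<forall>n k. k \<le> kbar \<longrightarrow>
           (\<forall>ustar. ustar \<in> U \<and> (\<forall>v\<in>U. L n ustar \<le> L n v) \<longrightarrow>
              measure (f n k) (ball ustar r) \<ge> \<delta>)"
proof -
  have cU: "compact U" and cvx: "convex U" and cl: "closed U" and ne: "U \<noteq> {}" and bd: "bounded U"
    unfolding U_def using box_props[OF umin_umax] by auto
  obtain B where B: "\<forall>x\<in>U. norm x \<le> B" using bd by (auto simp: bounded_iff)
  have B0: "B \<ge> 0" using ne B by (meson all_not_in_conv norm_ge_zero order_trans)
  define s where "s = \<sigma> * sqrt \<tau>"
  have s: "s > 0" unfolding s_def using params by simp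
  have a: "0 \<le> lam * \<tau>" "lam * \<tau> \<le> 1" using params by auto
  obtain c where c: "c > 0"
    and gauss: "\<forall>p::real^'d. norm p \<le> 2 * B / s \<longrightarrow> emeasure std_gauss (ball p (r / s)) \<ge> ennreal c"
    using gauss_ball_lower[of "r / s" "2 * B / s"] s r_pos B0 by auto
  have Lc: "continuous_on UNIV (L n)" for n
    unfolding L_def mpc_cost_def by (intro continuous_intros)
  have Lnn: "\<forall>u. L n u \<ge> 0" for n
    unfolding L_def mpc_cost_def using \<nu>_pos by auto
  define Inv where "Inv M \<longleftrightarrow> prob_space M \<and> sets M = sets borel \<and> (AE v in M. v \<in> U)" for M
  have inv_step: "Inv (f n (Suc k))" if "Inv (f n k)" "k < kbar" for n k
  proof -
    have eq: "f n (Suc k) = distr (f n k \<Otimes>\<^sub>M std_gauss) borel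
          (\<lambda>(v, \<theta>). closest_point U
             (v + (lam * \<tau>) *\<^sub>R (cons_point \<alpha> (L n) (f n k) - v) + (\<sigma> * sqrt \<tau>) *\<^sub>R \<theta>))"
      using f_step that(2) by blast
    show ?thesis unfolding eq Inv_def
      using step_inv[of "f n k" U "lam * \<tau>" "cons_point \<alpha> (L n) (f n k)" "\<sigma> * sqrt \<tau>"] that(1) cvx cl ne
      unfolding Inv_def by blast
  qed
  have inv00: "Inv (f 0 0)"
    unfolding Inv_def using f00_prob f00_sets supp_AE[OF f00_sets cl f00_supp] by blast
  have kind: "\<forall>k\<le>kbar. Inv (f n k)" if "Inv (f n 0)" for n
  proof (intro allI impI)
    fix k assume "k \<le> kbar"
    then show "Inv (f n k)"
    proof (induction k)
      case 0 then show ?case using that by simp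
    next
      case (Suc k) then show ?case using inv_step by simp
    qed
  qed
  have inv_n0: "Inv (f n 0)" for n
  proof (induction n)
    case 0 then show ?case by (rule inv00)
  next
    case (Suc n)
    then have "Inv (f n kbar)" using kind by blast
    then show ?case using f_restart by simp
  qed
  have step_bound: "measure (f n (Suc k)) (ball ustar r) \<ge> c" if "k < kbar" "ustar \<in> U" for n k ustar
  proof -
    have I: "Inv (f n k)" using kind[OF inv_n0] that(1) by simp
    then have P: "prob_space (f n k)" and sM: "sets (f n k) = sets borel" and AEU: "AE v in f n k. v \<in> U"
      unfolding Inv_def by auto
    have m: "cons_point \<alpha> (L n) (f n k) \<in> U"
      unfolding U_def by (rule cons_in_box[OF P sM AEU[unfolded U_def] Lc Lnn]) (use params in simp)
    have eq: "f n (Suc k) = distr (f n k \<Otimes>\<^sub>M std_gauss) borel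
          (\<lambda>(v, \<theta>). closest_point U
             (v + (lam * \<tau>) *\<^sub>R (cons_point \<alpha> (L n) (f n k) - v) + s *\<^sub>R \<theta>))"
      using f_step that(1) unfolding s_def by blast
    have E: "emeasure (f n (Suc k)) (ball ustar r) \<ge> ennreal c"
      unfolding eq by (rule step_lower[OF P sM AEU cvx cl ne B m a s r_pos gauss that(2)])
    have "prob_space (f n (Suc k))" using inv_step[OF I that(1)] unfolding Inv_def by blast
    then have "emeasure (f n (Suc k)) (ball ustar r) = ennreal (measure (f n (Suc k)) (ball ustar r))"
      unfolding prob_space_def using finite_measure.emeasure_eq_measure by blast
    then show ?thesis using E by simp
  qed
  have fin00: "finite_measure (f 0 0)" using f00_prob unfolding prob_space_def by blast
  obtain \<delta>0 where \<delta>0: "\<delta>0 > 0" "\<forall>u\<in>U. measure (f 0 0) (ball u r) \<ge> \<delta>0"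
    using unif_pos[OF f00_sets fin00 cU ne _ r_pos] f00_supp by auto
  show ?thesis
  proof (intro exI[of _ "min \<delta>0 c"] conjI allI impI)
    show "0 < min \<delta>0 c" using \<delta>0 c by simp
    fix n k ustar
    assume k: "k \<le> kbar" and us: "ustar \<in> U \<and> (\<forall>v\<in>U. L n ustar \<le> L n v)"
    show "min \<delta>0 c \<le> measure (f n k) (ball ustar r)"
    proof (cases k)
      case (Suc k')
      then show ?thesis using step_bound[of k' ustar n] k us by simp
    next
      case 0
      show ?thesis
      proof (cases n)
        case 0
        then show ?thesis using \<delta>0 us \<open>k = 0\<close> by fastforce
      next
        case (Suc n')
        have "kbar = Suc (kbar - 1)" using kbar_pos by simp
        then have "f n k = f n' (Suc (kbar - 1))" using f_restart \<open>k = 0\<close> Suc by simp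
        moreover have "measure (f n' (Suc (kbar - 1))) (ball ustar r) \<ge> c"
          using step_bound[of "kbar - 1" ustar n'] kbar_pos us by simp
        ultimately show ?thesis by simp
      qed
    qed
  qed
qed

end
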